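(* Let $n\ge 1$ and let $T$ be a tree chosen uniformly at random among all labeled trees on the vertex set $\{1,\dots,n\}$. For a tree with vertex degrees $k_1,\dots,k_n$, let $\langle k^2\rangle=\frac{1}{n}\sum_{i=1}^n k_i^2$ and $E_0[C]=\frac{n}{6}\left(n-1-\langle k^2\rangle\right)$. Then \[ E\big[E_0[C]\big]=\frac{1}{6}(n-1)\left(n-5+\frac{6}{n}\right)=\frac{n^2}{6}-n+\frac{11}{6}-\frac{1}{n}, \] where the outer expectation is over the uniformly random labeled tree $T$.
   Context: For a tree on $n$ vertices, $E_0[C]=\frac{n}{6}(n-1-\langle k^2\rangle)$ is the expected number of pairs of edges that cross when the vertices are placed at positions $1,\dots,n$ by a uniformly random permutation (two edges $\{s,t\}$, $\{u,v\}$ cross iff exactly one of the positions of $s,t$ lies strictly between the positions of $u$ and $v$, the other lying strictly outside that interval). *)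

theory Defs
  imports Complex_Main
begin

definition simple_graph :: "'a set \<Rightarrow> 'a set set \<Rightarrow> bool" where
  "simple_graph V E \<longleftrightarrow> E \<subseteq> {{u, v} | u v. u \<in> V \<and> v \<in> V \<and> u \<noteq> v}"

definition graph_connected :: "'a set \<Rightarrow> 'a set set \<Rightarrow> bool" where
  "graph_connected V E \<longleftrightarrow>
     (\<forall>u\<in>V. \<forall>v\<in>V. (u, v) \<in> {(x, y). {x, y} \<in> E}\<^sup>*)"

definition is_cycle :: "'a set set \<Rightarrow> 'a list \<Rightarrow> bool" where
  "is_cycle E vs \<longleftrightarrow> length vs \<ge> 3 \<and> distinct vs \<and>
     (\<forall>i < length vs. {vs ! i, vs ! ((i + 1) mod length vs)} \<in> E)"

definition acyclic_graph :: "'a set set \<Rightarrow> bool" where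
  "acyclic_graph E \<longleftrightarrow> \<not> (\<exists>vs. is_cycle E vs)"

definition is_tree :: "'a set \<Rightarrow> 'a set set \<Rightarrow> bool" where
  "is_tree V E \<longleftrightarrow> simple_graph V E \<and> graph_connected V E \<and> acyclic_graph E"

definition labeled_trees :: "nat \<Rightarrow> nat set set set" where
  "labeled_trees n = {E. is_tree {1..n} E}"

definition degree :: "'a set set \<Rightarrow> 'a \<Rightarrow> nat" where
  "degree E v = card {e \<in> E. v \<in> e}"

definition second_moment_degree :: "nat \<Rightarrow> nat set set \<Rightarrow> real" where
  "second_moment_degree n E = (1 / real n) * (\<Sum>i = 1..n. (real (degree E i))^2)"

definition E0C :: "nat \<Rightarrow> nat set set \<Rightarrow> real" where
  "E0C n E = real n / 6 * (real n - 1 - second_moment_degree n E)"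

end

theory Submission
  imports Defs
begin
definition reach :: "'a set set \<Rightarrow> 'a \<Rightarrow> 'a \<Rightarrow> bool" where
  "reach G a b \<longleftrightarrow> (a, b) \<in> {(x, y). {x, y} \<in> G}\<^sup>*"

lemma reach_refl[simp]: "reach G a a"
  by (simp add: reach_def)

lemma reach_edge: "{a, b} \<in> G \<Longrightarrow> reach G a b"
  unfolding reach_def by (rule r_into_rtrancl) simp

lemma reach_trans: "reach G a b \<Longrightarrow> reach G b c \<Longrightarrow> reach G a c"
  unfolding reach_def by (rule rtrancl_trans)

lemma reach_sym: assumes "reach G a b" shows "reach G b a"
proof -
  have "sym {(x, y). {x, y} \<in> G}" by (auto simp: sym_def insert_commute)
  then show ?thesis using assms unfolding reach_def
    by (metis sym_rtrancl symD)
qed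

lemma reach_mono: "reach H a b" if "reach G a b" "G \<subseteq> H"
proof -
  have "{(x, y). {x, y} \<in> G} \<subseteq> {(x, y). {x, y} \<in> H}" using that by auto
  then show ?thesis using that(1) unfolding reach_def by (meson rtrancl_mono subsetD)
qed

lemma reach_induct[consumes 1, case_names refl step]:
  assumes "reach G a b" "P a"
    "\<And>w w'. reach G a w \<Longrightarrow> {w, w'} \<in> G \<Longrightarrow> P w \<Longrightarrow> P w'"
  shows "P b"
  using assms(1) unfolding reach_def
proof (induction rule: rtrancl_induct)
  case base then show ?case using assms(2) .
next
  case (step y z) then show ?case using assms(3)[of y z] by (auto simp: reach_def)
qed

lemma reach_insert:
  assumes "reach (insert {p, q} G) a w"
  shows "reach G a w \<or> (reach G a p \<and> reach G q w) \<or> (reach G a q \<and> reach G p w)"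
  using assms
proof (induction rule: reach_induct)
  case refl then show ?case by simp
next
  case (step w w')
  show ?case
  proof (cases "{w, w'} \<in> G")
    case True
    then have "reach G w w'" by (rule reach_edge)
    then show ?thesis using step.IH by (meson reach_trans)
  next
    case False
    then have "{w, w'} = {p, q}" using step.hyps by auto
    then have "(w = p \<and> w' = q) \<or> (w = q \<and> w' = p)" by (auto simp: doubleton_eq_iff)
    then show ?thesis using step.IH by (auto intro: reach_sym)
  qed
qed

lemma reach_isolated:
  assumes "reach G a b" "a \<noteq> b" shows "\<exists>e\<in>G. b \<in> e"
proof -
  have "a = b \<or> (\<exists>e\<in>G. b \<in> e)" using assms(1)
    by (induction rule: reach_induct) auto
  then show ?thesis using assms(2) by simp
qed

definition bridges :: "'a set set \<Rightarrow> bool" where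
  "bridges E \<longleftrightarrow> (\<forall>a b. {a, b} \<in> E \<longrightarrow> \<not> reach (E - {{a, b}}) a b)"

definition tree' :: "'a set \<Rightarrow> 'a set set \<Rightarrow> bool" where
  "tree' V E \<longleftrightarrow> simple_graph V E \<and> (\<forall>u\<in>V. \<forall>w\<in>V. reach E u w) \<and> bridges E"

fun walk :: "'a set set \<Rightarrow> 'a list \<Rightarrow> bool" where
  "walk G [] = False"
| "walk G [x] = True"
| "walk G (x # y # xs) = ({x, y} \<in> G \<and> walk G (y # xs))"

lemma walk_append: "walk G (xs @ w # ys) \<longleftrightarrow> walk G (xs @ [w]) \<and> walk G (w # ys)"
proof (induction xs)
  case Nil then show ?case by simp
next
  case (Cons x xs) then show ?case by (cases xs) auto
qed

lemma walk_nth: "walk G xs \<longleftrightarrow> xs \<noteq> [] \<and> (\<forall>i. Suc i < length xs \<longrightarrow> {xs ! i, xs ! Suc i} \<in> G)"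
proof (induction G xs rule: walk.induct)
  case (3 G x y xs)
  show ?case
  proof
    assume "walk G (x # y # xs)"
    then show "x # y # xs \<noteq> [] \<and> (\<forall>i. Suc i < length (x # y # xs) \<longrightarrow> {(x # y # xs) ! i, (x # y # xs) ! Suc i} \<in> G)"
      using 3 by (auto simp: less_Suc_eq_0_disj)
  next
    assume h: "x # y # xs \<noteq> [] \<and> (\<forall>i. Suc i < length (x # y # xs) \<longrightarrow> {(x # y # xs) ! i, (x # y # xs) ! Suc i} \<in> G)"
    then have "{x, y} \<in> G" using h[THEN conjunct2, rule_format, of 0] by simp
    moreover have "\<forall>i. Suc i < length (y # xs) \<longrightarrow> {(y # xs) ! i, (y # xs) ! Suc i} \<in> G"
    proof (intro allI impI)
      fix i assume "Suc i < length (y # xs)"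
      then show "{(y # xs) ! i, (y # xs) ! Suc i} \<in> G"
        using h[THEN conjunct2, rule_format, of "Suc i"] by simp
    qed
    ultimately show "walk G (x # y # xs)" using 3 by simp
  qed
qed auto

lemma reach_walk:
  assumes "reach G a b" shows "\<exists>ps. walk G ps \<and> hd ps = a \<and> last ps = b"
  using assms
proof (induction rule: reach_induct)
  case refl then show ?case by (intro exI[of _ "[a]"]) simp
next
  case (step w w')
  then obtain ps where ps: "walk G ps" "hd ps = a" "last ps = w" by blast
  then have "ps \<noteq> []" by auto
  then obtain qs where qs: "ps = qs @ [w]" using ps(3) by (metis append_butlast_last_id)
  have "walk G (qs @ w # [w'])" using walk_append[of G qs w "[w']"] ps qs step by simp
  moreover have "hd (qs @ w # [w']) = a" using ps qs by (cases qs) auto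
  ultimately show ?case by (intro exI[of _ "qs @ [w, w']"]) simp
qed

lemma reach_distinct_walk:
  assumes "reach G a b" shows "\<exists>ps. walk G ps \<and> hd ps = a \<and> last ps = b \<and> distinct ps"
proof -
  let ?P = "\<lambda>k. \<exists>ps. walk G ps \<and> hd ps = a \<and> last ps = b \<and> length ps = k"
  obtain k where "?P k" using reach_walk[OF assms] by blast
  then obtain m where m: "?P m" "\<And>k. ?P k \<Longrightarrow> m \<le> k"
    using ex_has_least_nat[of ?P k "\<lambda>x. x"] by auto
  then obtain ps where ps: "walk G ps" "hd ps = a" "last ps = b" "length ps = m" by blast
  have "distinct ps"
  proof (rule ccontr)
    assume "\<not> distinct ps"
    from not_distinct_decomp[OF this] obtain xs w ys zs where "ps = xs @ [w] @ ys @ [w] @ zs"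
      by blast
    then have d: "ps = xs @ w # ys @ w # zs" by simp
    have w1: "walk G (xs @ [w])" and w2: "walk G (w # ys @ w # zs)"
      using ps(1) walk_append[of G xs w "ys @ w # zs"] unfolding d by auto
    have "walk G (w # zs)" using w2 walk_append[of G "w # ys" w zs] by simp
    then have "walk G (xs @ w # zs)" using w1 walk_append[of G xs w zs] by blast
    moreover have "hd (xs @ w # zs) = a" using ps(2) d by (cases xs) auto
    moreover have "last (xs @ w # zs) = b" using ps(3) d by (cases zs) auto
    ultimately have "?P (length (xs @ w # zs))" by blast
    then have "m \<le> length (xs @ w # zs)" by (rule m(2))
    then show False using ps(4) d by simp
  qed
  then show ?thesis using ps by blast
qed

lemma bridges_imp_acyclic:
  assumes "bridges E" shows "acyclic_graph E"
  unfolding acyclic_graph_def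
proof
  assume "\<exists>vs. is_cycle E vs"
  then obtain vs where c: "length vs \<ge> 3" "distinct vs"
    "\<And>i. i < length vs \<Longrightarrow> {vs ! i, vs ! ((i + 1) mod length vs)} \<in> E"
    unfolding is_cycle_def by blast
  define m where "m = length vs"
  define e where "e = {vs ! 0, vs ! 1}"
  have "0 < length vs" using c(1) by linarith
  from c(3)[OF this] have eE: "e \<in> E" using c(1) by (simp add: e_def)
  have step: "reach (E - {e}) (vs ! 1) (vs ! i)" if "1 \<le> i" "i < m" for i
    using that
  proof (induction i)
    case 0 then show ?case by simp
  next
    case (Suc i)
    show ?case
    proof (cases "i = 0")
      case True then show ?thesis by simp
    next
      case False
      have ih: "reach (E - {e}) (vs ! 1) (vs ! i)" using Suc False by simp
      have "{vs ! i, vs ! Suc i} \<in> E" using c(3)[of i] Suc.prems by (simp add: m_def)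
      moreover have "{vs ! i, vs ! Suc i} \<noteq> e"
      proof
        assume "{vs ! i, vs ! Suc i} = e"
        then have "vs ! Suc i \<in> {vs ! 0, vs ! 1}" by (auto simp: e_def)
        moreover have "vs ! Suc i \<noteq> vs ! 0"
          using c(2) Suc.prems unfolding m_def
          by (metis Suc_lessD nat.distinct(1) nth_eq_iff_index_eq zero_less_Suc less_trans)
        moreover have "vs ! Suc i \<noteq> vs ! 1"
          using c(2) Suc.prems False unfolding m_def by (simp add: nth_eq_iff_index_eq)
        ultimately show False by simp
      qed
      ultimately have "reach (E - {e}) (vs ! i) (vs ! Suc i)" by (intro reach_edge) auto
      then show ?thesis using ih reach_trans by metis
    qed
  qed
  have "reach (E - {e}) (vs ! 1) (vs ! (m - 1))" using step[of "m - 1"] c(1) m_def by simp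
  moreover have "{vs ! (m - 1), vs ! 0} \<in> E"
  proof -
    have s: "m - 1 + 1 = m" using c(1) unfolding m_def by linarith
    have h0: "(m - 1 + 1) mod m = 0" by (subst s) simp
    have h: "m - 1 < length vs" "(m - 1 + 1) mod length vs = 0" using c(1) h0 unfolding m_def by auto
    show ?thesis using c(3)[OF h(1)] unfolding h(2) .
  qed
  moreover have "{vs ! (m - 1), vs ! 0} \<noteq> e"
  proof
    assume "{vs ! (m - 1), vs ! 0} = e"
    then have j: "vs ! (m - 1) \<in> {vs ! 0, vs ! 1}" by (auto simp: e_def)
    have i: "m - 1 < length vs" "0 < length vs" "1 < length vs" "m - 1 \<noteq> 0" "m - 1 \<noteq> 1"
      using c(1) unfolding m_def by linarith+
    have k1: "vs ! (m - 1) \<noteq> vs ! 0" using nth_eq_iff_index_eq[OF c(2) i(1) i(2)] i(4) by simp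
    have k2: "vs ! (m - 1) \<noteq> vs ! 1" using nth_eq_iff_index_eq[OF c(2) i(1) i(3)] i(5) by simp
    show False using j k1 k2 by simp
  qed
  ultimately have "reach (E - {e}) (vs ! (m - 1)) (vs ! 0)" "reach (E - {e}) (vs ! 1) (vs ! (m - 1))"
    by (auto intro: reach_edge)
  then have "reach (E - {e}) (vs ! 1) (vs ! 0)" by (rule reach_trans[rotated])
  then have "reach (E - {e}) (vs ! 0) (vs ! 1)" by (rule reach_sym)
  then show False using assms eE unfolding bridges_def e_def by blast
qed

lemma acyclic_imp_bridges:
  assumes "simple_graph V E" "acyclic_graph E" shows "bridges E"
  unfolding bridges_def
proof (intro allI impI notI)
  fix a b assume ab: "{a, b} \<in> E" "reach (E - {{a, b}}) a b"
  have "a \<noteq> b" using assms(1) ab(1) unfolding simple_graph_def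
    by (auto simp: doubleton_eq_iff)
  obtain ps where ps: "walk (E - {{a, b}}) ps" "hd ps = a" "last ps = b" "distinct ps"
    using reach_distinct_walk[OF ab(2)] by blast
  have ne: "ps \<noteq> []" using ps(1) by auto
  have l2: "length ps \<ge> 2"
  proof (rule ccontr)
    assume "\<not> length ps \<ge> 2"
    then have "length ps = 1" using ne by (cases ps) (auto simp: Suc_le_eq)
    then have "hd ps = last ps" by (cases ps) auto
    then show False using ps \<open>a \<noteq> b\<close> by simp
  qed
  have l3: "length ps \<ge> 3"
  proof (rule ccontr)
    assume "\<not> length ps \<ge> 3"
    then have "length ps = 2" using l2 by simp
    then obtain x y where "ps = [x, y]"
      by (cases ps; cases "tl ps") auto
    then show False using ps by simp
  qed
  have "is_cycle E ps"
    unfolding is_cycle_def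
  proof (intro conjI allI impI)
    show "3 \<le> length ps" by (rule l3)
    show "distinct ps" by (rule ps(4))
    fix i assume i: "i < length ps"
    show "{ps ! i, ps ! ((i + 1) mod length ps)} \<in> E"
    proof (cases "Suc i < length ps")
      case True
      then show ?thesis using ps(1) unfolding walk_nth by auto
    next
      case False
      then have "i = length ps - 1" using i by simp
      then have "ps ! i = b" "(i + 1) mod length ps = 0" using ps(3) ne i
        by (auto simp: last_conv_nth)
      moreover have "ps ! 0 = a" using ps(2) ne by (simp add: hd_conv_nth)
      ultimately show ?thesis using ab(1) by (simp add: insert_commute)
    qed
  qed
  then show False using assms(2) unfolding acyclic_graph_def by blast
qed

lemma is_tree_iff: "is_tree V E \<longleftrightarrow> tree' V E"
proof
  assume h: "is_tree V E"
  then have s: "simple_graph V E" and c: "graph_connected V E" and a: "acyclic_graph E"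
    by (auto simp: is_tree_def)
  have b: "bridges E" by (rule acyclic_imp_bridges[OF s a])
  have "\<forall>u\<in>V. \<forall>w\<in>V. reach E u w" using c unfolding graph_connected_def reach_def .
  then show "tree' V E" unfolding tree'_def using s b by simp
next
  assume h: "tree' V E"
  then have s: "simple_graph V E" and c: "\<forall>u\<in>V. \<forall>w\<in>V. reach E u w" and b: "bridges E"
    by (auto simp: tree'_def)
  have a: "acyclic_graph E" by (rule bridges_imp_acyclic[OF b])
  have "graph_connected V E" using c unfolding graph_connected_def reach_def .
  then show "is_tree V E" unfolding is_tree_def using s a by simp
qed

lemma tree_edge:
  assumes "tree' V T" "e \<in> T" shows "\<exists>a b. e = {a, b} \<and> a \<noteq> b \<and> a \<in> V \<and> b \<in> V"
  using assms unfolding tree'_def simple_graph_def by blast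

lemma tree_edge2:
  assumes "tree' V T" "{a, b} \<in> T" shows "a \<noteq> b" "a \<in> V" "b \<in> V"
  using tree_edge[OF assms] by (auto simp: doubleton_eq_iff)

lemma tree_bridge:
  assumes "tree' V T" "{a, b} \<in> T" shows "\<not> reach (T - {{a, b}}) a b"
  using assms unfolding tree'_def bridges_def by blast

lemma tree_side:
  assumes "tree' V T" "{x, y} \<in> T" "w \<in> V"
  shows "reach (T - {{x, y}}) x w \<or> reach (T - {{x, y}}) y w"
proof -
  have "x \<in> V" using tree_edge2[OF assms(1,2)] by simp
  then have "reach T x w" using assms(1,3) unfolding tree'_def by blast
  moreover have "T = insert {x, y} (T - {{x, y}})" using assms(2) by blast
  ultimately have "reach (insert {x, y} (T - {{x, y}})) x w" by simp
  from reach_insert[OF this] show ?thesis by auto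
qed

lemma tree_move:
  assumes T: "tree' V T" and e: "{p, q} \<in> T" and r: "r \<in> V"
    and nr: "\<not> reach (T - {{p, q}}) r q"
  shows "tree' V (insert {r, q} (T - {{p, q}}))"
proof -
  let ?G = "T - {{p, q}}"
  let ?T2 = "insert {r, q} ?G"
  have pq: "p \<noteq> q" "p \<in> V" "q \<in> V" using tree_edge2[OF T e] by auto
  have rq: "r \<noteq> q" using nr reach_refl by metis
  have rp: "reach ?G p r"
  proof -
    have "reach ?G p r \<or> reach ?G q r" using tree_side[OF T e r] .
    moreover have "\<not> reach ?G q r" using nr reach_sym by metis
    ultimately show ?thesis by blast
  qed
  have simple: "simple_graph V ?T2"
    unfolding simple_graph_def
  proof
    fix f assume "f \<in> ?T2"
    then have "f = {r, q} \<or> f \<in> T" by blast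
    then show "f \<in> {{u, v} |u v. u \<in> V \<and> v \<in> V \<and> u \<noteq> v}"
    proof
      assume "f = {r, q}" then show ?thesis using r pq rq by blast
    next
      assume "f \<in> T" then obtain a b where "f = {a, b}" "a \<noteq> b" "a \<in> V" "b \<in> V"
        using tree_edge[OF T] by blast
      then show ?thesis by blast
    qed
  qed
  have side: "reach ?G p w \<or> reach ?G q w" if "w \<in> V" for w
    using tree_side[OF T e that] .
  have sub: "?G \<subseteq> ?T2" by blast
  have "reach ?T2 p q"
  proof -
    have "reach ?T2 p r" using reach_mono[OF rp sub] .
    moreover have "reach ?T2 r q" by (rule reach_edge) simp
    ultimately show ?thesis by (rule reach_trans)
  qed
  have pw: "reach ?T2 p w" if "w \<in> V" for w
  proof (cases "reach ?G p w")
    case True then show ?thesis by (rule reach_mono[OF _ sub])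
  next
    case False
    then have "reach ?G q w" using side[OF that] by blast
    then have "reach ?T2 q w" by (rule reach_mono[OF _ sub])
    then show ?thesis using \<open>reach ?T2 p q\<close> by (rule reach_trans[rotated])
  qed
  have conn: "\<forall>u\<in>V. \<forall>w\<in>V. reach ?T2 u w"
  proof (intro ballI)
    fix u w assume "u \<in> V" "w \<in> V"
    then show "reach ?T2 u w" using reach_trans[OF reach_sym[OF pw[of u]] pw[of w]] by simp
  qed
  have br: "bridges ?T2"
    unfolding bridges_def
  proof (intro allI impI notI)
    fix a b assume f: "{a, b} \<in> ?T2" and rab: "reach (?T2 - {{a, b}}) a b"
    show False
    proof (cases "{a, b} = {r, q}")
      case True
      then have "?T2 - {{a, b}} \<subseteq> ?G" by blast
      then have "reach ?G a b" by (rule reach_mono[OF rab])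
      then have "reach ?G r q \<or> reach ?G q r" using True by (auto simp: doubleton_eq_iff)
      then have "reach ?G r q" using reach_sym by metis
      then show False using nr by simp
    next
      case False
      then have fG: "{a, b} \<in> ?G" using f by blast
      have eq: "?T2 - {{a, b}} = insert {r, q} (?G - {{a, b}})" using False by blast
      have s1: "?G - {{a, b}} \<subseteq> T - {{a, b}}" by blast
      have s2: "?G - {{a, b}} \<subseteq> ?G" by blast
      have abG: "reach ?G a b" by (rule reach_edge) (rule fG)
      have "reach (?G - {{a, b}}) a b \<or>
            (reach (?G - {{a, b}}) a r \<and> reach (?G - {{a, b}}) q b) \<or>
            (reach (?G - {{a, b}}) a q \<and> reach (?G - {{a, b}}) r b)"
        using reach_insert[of r q "?G - {{a, b}}" a b] rab eq by simp
      then show False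
      proof (elim disjE conjE)
        assume "reach (?G - {{a, b}}) a b"
        then have "reach (T - {{a, b}}) a b" using reach_mono[OF _ s1] by blast
        then show False using tree_bridge[OF T] fG by blast
      next
        assume h: "reach (?G - {{a, b}}) a r" "reach (?G - {{a, b}}) q b"
        have ra: "reach ?G r a" using reach_sym[OF reach_mono[OF h(1) s2]] .
        have bq: "reach ?G b q" using reach_sym[OF reach_mono[OF h(2) s2]] .
        have "reach ?G r q" using reach_trans[OF reach_trans[OF ra abG] bq] .
        then show False using nr by simp
      next
        assume h: "reach (?G - {{a, b}}) a q" "reach (?G - {{a, b}}) r b"
        have rb: "reach ?G r b" using reach_mono[OF h(2) s2] .
        have aq: "reach ?G a q" using reach_mono[OF h(1) s2] .
        have "reach ?G r q" using reach_trans[OF reach_trans[OF rb reach_sym[OF abG]] aq] .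
        then show False using nr by simp
      qed
    qed
  qed
  show ?thesis unfolding tree'_def by (intro conjI simple conn br)
qed

lemma tree_finite: assumes "finite V" "tree' V T" shows "finite T"
proof -
  have "T \<subseteq> Pow V" using assms(2) unfolding tree'_def simple_graph_def by blast
  then show ?thesis using assms(1) finite_subset by blast
qed

lemma tree_component:
  assumes T: "tree' V T" and e: "{x, y} \<in> T"
  defines "C \<equiv> {w \<in> V. reach (T - {{x, y}}) x w}"
  shows "tree' C {f \<in> T - {{x, y}}. f \<subseteq> C}"
proof -
  let ?G = "T - {{x, y}}"
  let ?F = "{f \<in> ?G. f \<subseteq> C}"
  have xV: "x \<in> V" using tree_edge2[OF T e] by simp
  have simple: "simple_graph C ?F"
    unfolding simple_graph_def
  proof
    fix f assume f: "f \<in> ?F"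
    then obtain a b where "f = {a, b}" "a \<noteq> b" using tree_edge[OF T] by blast
    moreover have "f \<subseteq> C" using f by blast
    ultimately show "f \<in> {{u, v} |u v. u \<in> C \<and> v \<in> C \<and> u \<noteq> v}" by blast
  qed
  have xw: "reach ?F x w" if "reach ?G x w" for w
    using that
  proof (induction rule: reach_induct)
    case refl then show ?case by simp
  next
    case (step w w')
    have "w \<in> V" "w' \<in> V" using tree_edge2[OF T, of w w'] step.hyps(2) by auto
    moreover have "reach ?G x w'" using reach_trans[OF step.hyps(1) reach_edge[OF step.hyps(2)]] .
    ultimately have "{w, w'} \<subseteq> C" using step.hyps(1) unfolding C_def by auto
    then have "{w, w'} \<in> ?F" using step.hyps(2) by blast
    then show ?case using reach_trans[OF step.IH reach_edge] by blast
  qed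
  have conn: "\<forall>u\<in>C. \<forall>w\<in>C. reach ?F u w"
  proof (intro ballI)
    fix u w assume "u \<in> C" "w \<in> C"
    then have "reach ?G x u" "reach ?G x w" unfolding C_def by simp_all
    then have "reach ?F x u" "reach ?F x w" using xw by blast+
    then show "reach ?F u w" by (rule reach_trans[OF reach_sym])
  qed
  have br: "bridges ?F"
    unfolding bridges_def
  proof (intro allI impI notI)
    fix a b assume ab: "{a, b} \<in> ?F" and rab: "reach (?F - {{a, b}}) a b"
    have sub: "?F - {{a, b}} \<subseteq> T - {{a, b}}" by blast
    have "reach (T - {{a, b}}) a b" by (rule reach_mono[OF rab sub])
    moreover have "{a, b} \<in> T" using ab by simp
    ultimately show False using tree_bridge[OF T] by blast
  qed
  show ?thesis unfolding tree'_def by (intro conjI simple conn br)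
qed

lemma tree_card:
  assumes "finite V" "V \<noteq> {}" "tree' V T" shows "card T + 1 = card V"
  using assms
proof (induction "card V" arbitrary: V T rule: less_induct)
  case less
  show ?case
  proof (cases "T = {}")
    case True
    obtain u where u: "u \<in> V" using less.prems(2) by blast
    have "w = u" if "w \<in> V" for w
    proof -
      have "reach {} u w" using less.prems(3) u that True unfolding tree'_def by blast
      then show ?thesis unfolding reach_def by simp
    qed
    then have "V = {u}" using u by blast
    then show ?thesis using True by simp
  next
    case False
    then obtain e where eT: "e \<in> T" by blast
    then obtain x y where xy: "e = {x, y}" "x \<noteq> y" "x \<in> V" "y \<in> V"
      using tree_edge[OF less.prems(3)] by blast
    let ?G = "T - {{x, y}}"
    define Cx where "Cx = {w \<in> V. reach ?G x w}"
    define Cy where "Cy = {w \<in> V. reach ?G y w}"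
    have exy: "{x, y} \<in> T" using eT xy(1) by simp
    have e': "{y, x} \<in> T" using exy by (simp add: insert_commute)
    have G': "T - {{y, x}} = ?G" by (simp add: insert_commute)
    have tx: "tree' Cx {f \<in> ?G. f \<subseteq> Cx}"
      unfolding Cx_def by (rule tree_component[OF less.prems(3) exy])
    have ty: "tree' Cy {f \<in> ?G. f \<subseteq> Cy}"
      using tree_component[OF less.prems(3) e'] unfolding Cy_def G' .
    have nxy: "\<not> reach ?G x y" using tree_bridge[OF less.prems(3) exy] .
    have disj: "Cx \<inter> Cy = {}"
    proof (rule ccontr)
      assume "Cx \<inter> Cy \<noteq> {}"
      then obtain w where w: "w \<in> Cx" "w \<in> Cy" by blast
      then have h1: "reach ?G x w" and h2: "reach ?G y w" unfolding Cx_def Cy_def by simp_all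
      have "reach ?G x y" using reach_trans[OF h1 reach_sym[OF h2]] .
      then show False using nxy by simp
    qed
    have un: "Cx \<union> Cy = V"
    proof (intro equalityI subsetI)
      fix w assume "w \<in> V"
      then have "reach ?G x w \<or> reach ?G y w" by (rule tree_side[OF less.prems(3) exy])
      then show "w \<in> Cx \<union> Cy" unfolding Cx_def Cy_def using \<open>w \<in> V\<close> by blast
    next
      fix w assume "w \<in> Cx \<union> Cy" then show "w \<in> V" unfolding Cx_def Cy_def by blast
    qed
    have fin: "finite Cx" "finite Cy" using less.prems(1) unfolding Cx_def Cy_def by simp_all
    have xCx: "x \<in> Cx" using xy unfolding Cx_def by simp
    have yCy: "y \<in> Cy" using xy unfolding Cy_def by simp
    have yCx: "y \<notin> Cx" using disj yCy by blast
    have xCy: "x \<notin> Cy" using disj xCx by blast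
    have cx: "card Cx < card V"
    proof (rule psubset_card_mono[OF less.prems(1)])
      show "Cx \<subset> V" using un yCx xy(4) by blast
    qed
    have cy: "card Cy < card V"
    proof (rule psubset_card_mono[OF less.prems(1)])
      show "Cy \<subset> V" using un xCy xy(3) by blast
    qed
    have nx: "Cx \<noteq> {}" "Cy \<noteq> {}" using xCx yCy by auto
    have ihx: "card {f \<in> ?G. f \<subseteq> Cx} + 1 = card Cx"
      using less.hyps[OF cx fin(1) nx(1) tx] .
    have ihy: "card {f \<in> ?G. f \<subseteq> Cy} + 1 = card Cy"
      using less.hyps[OF cy fin(2) nx(2) ty] .
    have splitG: "?G = {f \<in> ?G. f \<subseteq> Cx} \<union> {f \<in> ?G. f \<subseteq> Cy}"
    proof (intro equalityI subsetI)
      fix f assume fG: "f \<in> ?G"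
      then obtain a b where ab: "f = {a, b}" "a \<in> V" "b \<in> V"
        using tree_edge[OF less.prems(3)] by blast
      have rab: "reach ?G a b" using fG ab reach_edge by metis
      have "a \<in> Cx \<or> a \<in> Cy" using un ab by blast
      then show "f \<in> {f \<in> ?G. f \<subseteq> Cx} \<union> {f \<in> ?G. f \<subseteq> Cy}"
      proof
        assume "a \<in> Cx"
        then have "reach ?G x a" unfolding Cx_def by simp
        then have "reach ?G x b" using reach_trans[OF _ rab] by blast
        then have "f \<subseteq> Cx" using \<open>a \<in> Cx\<close> ab unfolding Cx_def by blast
        then show ?thesis using fG by blast
      next
        assume "a \<in> Cy"
        then have "reach ?G y a" unfolding Cy_def by simp
        then have "reach ?G y b" using reach_trans[OF _ rab] by blast
        then have "f \<subseteq> Cy" using \<open>a \<in> Cy\<close> ab unfolding Cy_def by blast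
        then show ?thesis using fG by blast
      qed
    qed blast
    have disjG: "{f \<in> ?G. f \<subseteq> Cx} \<inter> {f \<in> ?G. f \<subseteq> Cy} = {}"
    proof (rule ccontr)
      assume "{f \<in> ?G. f \<subseteq> Cx} \<inter> {f \<in> ?G. f \<subseteq> Cy} \<noteq> {}"
      then obtain f where f: "f \<in> T" "f \<subseteq> Cx" "f \<subseteq> Cy" by blast
      then obtain a b where "f = {a, b}" using tree_edge[OF less.prems(3)] by blast
      then show False using f disj by blast
    qed
    have finT: "finite T" using tree_finite less.prems by blast
    have "card ?G = card ({f \<in> ?G. f \<subseteq> Cx} \<union> {f \<in> ?G. f \<subseteq> Cy})"
      using splitG by (rule arg_cong)
    also have "\<dots> = card {f \<in> ?G. f \<subseteq> Cx} + card {f \<in> ?G. f \<subseteq> Cy}"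
      by (rule card_Un_disjoint) (use finT disjG in auto)
    finally have cG: "card ?G = card {f \<in> ?G. f \<subseteq> Cx} + card {f \<in> ?G. f \<subseteq> Cy}" .
    have "card T = card ?G + 1"
    proof -
      have "{x, y} \<in> T" using eT xy by simp
      then have "T = insert {x, y} ?G" by blast
      moreover have "{x, y} \<notin> ?G" by simp
      ultimately have "card T = Suc (card ?G)" using finT by (metis card_insert_disjoint finite_Diff)
      then show ?thesis by simp
    qed
    moreover have "card V = card Cx + card Cy" using un card_Un_disjoint[OF fin disj] by simp
    ultimately show ?thesis using ihx ihy cG by simp
  qed
qed

lemma nb_unique:
  assumes T: "tree' V T" and v: "v \<in> V" and x: "x \<in> V" "x \<noteq> v"
  shows "\<exists>!y. {v, y} \<in> T \<and> reach (T - {{v, y}}) y x"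
proof (rule ex_ex1I)
  have "reach T v x" using T v x unfolding tree'_def by blast
  then have "x = v \<or> (\<exists>y. {v, y} \<in> T \<and> reach (T - {{v, y}}) y x)"
  proof (induction rule: reach_induct)
    case refl then show ?case by simp
  next
    case (step w w')
    show ?case
    proof (cases "w = v")
      case True
      then show ?thesis using step.hyps(2) by auto
    next
      case False
      then obtain y where y: "{v, y} \<in> T" "reach (T - {{v, y}}) y w" using step.IH by blast
      show ?thesis
      proof (cases "{w, w'} = {v, y}")
        case True
        then have "w' = v" using False by (auto simp: doubleton_eq_iff)
        then show ?thesis by simp
      next
        case False
        then have "reach (T - {{v, y}}) w w'" using step.hyps(2) by (intro reach_edge) auto
        then have "reach (T - {{v, y}}) y w'" by (rule reach_trans[OF y(2)])
        then show ?thesis using y(1) by blast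
      qed
    qed
  qed
  then show "\<exists>y. {v, y} \<in> T \<and> reach (T - {{v, y}}) y x" using x by blast
next
  fix y1 y2
  assume h1: "{v, y1} \<in> T \<and> reach (T - {{v, y1}}) y1 x"
    and h2: "{v, y2} \<in> T \<and> reach (T - {{v, y2}}) y2 x"
  show "y1 = y2"
  proof (rule ccontr)
    assume ne: "y1 \<noteq> y2"
    let ?e1 = "{v, y1}" and ?e2 = "{v, y2}"
    have neq: "?e1 \<noteq> ?e2" using ne by (auto simp: doubleton_eq_iff)
    have b1: "\<not> reach (T - {?e1}) v y1" using tree_bridge[OF T] h1 by blast
    have b2: "\<not> reach (T - {?e2}) v y2" using tree_bridge[OF T] h2 by blast
    let ?H = "T - {?e1} - {?e2}"
    have eq: "T - {?e2} = insert ?e1 ?H" using h1 neq by blast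
    have s1: "?H \<subseteq> T - {?e1}" and s2: "?H \<subseteq> T - {?e2}" by blast+
    have v2: "reach (T - {?e1}) v y2" using h2 neq by (intro reach_edge) auto
    have r2: "reach (insert ?e1 ?H) y2 x" using h2 eq by simp
    have h1': "reach (T - {?e1}) y1 x" using h1 by simp
    have "reach ?H y2 x \<or> (reach ?H y2 v \<and> reach ?H y1 x) \<or> (reach ?H y2 y1 \<and> reach ?H v x)"
      by (rule reach_insert[OF r2])
    then show False
    proof (elim disjE conjE)
      assume "reach ?H y2 x"
      then have "reach (T - {?e1}) y2 x" by (rule reach_mono[OF _ s1])
      then have "reach (T - {?e1}) v x" by (rule reach_trans[OF v2])
      then have "reach (T - {?e1}) v y1" by (rule reach_trans[OF _ reach_sym[OF h1']])
      then show False using b1 by simp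
    next
      assume "reach ?H y2 v"
      then have "reach (T - {?e2}) y2 v" by (rule reach_mono[OF _ s2])
      then have "reach (T - {?e2}) v y2" by (rule reach_sym)
      then show False using b2 by simp
    next
      assume "reach ?H v x"
      then have "reach (T - {?e1}) v x" by (rule reach_mono[OF _ s1])
      then have "reach (T - {?e1}) v y1" by (rule reach_trans[OF _ reach_sym[OF h1']])
      then show False using b1 by simp
    qed
  qed
qed

lemma degree_move:
  assumes "finite T" "{v, y} \<notin> T" "v \<noteq> x" "v \<noteq> y"
  shows "degree (insert {v, y} (T - {{x, y}})) v = degree T v + 1"
proof -
  have "{e \<in> insert {v, y} (T - {{x, y}}). v \<in> e} = insert {v, y} {e \<in> T. v \<in> e}"
    using assms(3,4) by auto
  moreover have "finite {e \<in> T. v \<in> e}" using assms(1) by simp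
  ultimately show ?thesis unfolding degree_def using assms(2) by simp
qed

lemma nb_card:
  assumes T: "tree' V T" and fin: "finite T"
  shows "card {y. {v, y} \<in> T} = degree T v"
proof -
  have "bij_betw (\<lambda>y. {v, y}) {y. {v, y} \<in> T} {e \<in> T. v \<in> e}"
  proof (rule bij_betwI')
    show "\<And>a b. a \<in> {y. {v, y} \<in> T} \<Longrightarrow> b \<in> {y. {v, y} \<in> T} \<Longrightarrow> ({v, a} = {v, b}) = (a = b)"
      by (auto simp: doubleton_eq_iff)
    show "\<And>a. a \<in> {y. {v, y} \<in> T} \<Longrightarrow> {v, a} \<in> {e \<in> T. v \<in> e}" by simp
    fix e assume "e \<in> {e \<in> T. v \<in> e}"
    then obtain a b where "e = {a, b}" "v \<in> e" "e \<in> T" using tree_edge[OF T] by blast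
    then show "\<exists>y \<in> {y. {v, y} \<in> T}. e = {v, y}" by (auto simp: insert_commute)
  qed
  then show ?thesis unfolding degree_def by (rule bij_betw_same_card)
qed

definition Sf :: "'a set set \<Rightarrow> 'a \<Rightarrow> ('a \<times> 'a) set" where
  "Sf T v = {(x, y). {x, y} \<in> T \<and> x \<noteq> v \<and> y \<noteq> v \<and> \<not> reach (T - {{x, y}}) v y}"

definition Rf :: "'a set \<Rightarrow> 'a set set \<Rightarrow> 'a \<Rightarrow> ('a \<times> 'a) set" where
  "Rf V T v = {(x, y). {v, y} \<in> T \<and> x \<in> V \<and> x \<noteq> v \<and> \<not> reach (T - {{v, y}}) x y}"

lemma Sf_card:
  assumes T: "tree' V T" and fin: "finite V" and v: "v \<in> V"
  shows "card (Sf T v) + degree T v = card T"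
proof -
  have finT: "finite T" using tree_finite fin T by blast
  have "bij_betw (\<lambda>(x, y). {x, y}) (Sf T v) {e \<in> T. v \<notin> e}"
  proof (rule bij_betwI')
    fix p q assume p: "p \<in> Sf T v" and q: "q \<in> Sf T v"
    obtain x y where pxy: "p = (x, y)" by fastforce
    obtain x' y' where qxy: "q = (x', y')" by fastforce
    show "((case p of (x, y) \<Rightarrow> {x, y}) = (case q of (x, y) \<Rightarrow> {x, y})) = (p = q)"
    proof
      assume "(case p of (x, y) \<Rightarrow> {x, y}) = (case q of (x, y) \<Rightarrow> {x, y})"
      then have eq: "{x, y} = {x', y'}" using pxy qxy by simp
      show "p = q"
      proof (rule ccontr)
        assume "p \<noteq> q"
        then have "x = y'" "y = x'" using eq pxy qxy by (auto simp: doubleton_eq_iff)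
        then have n1: "\<not> reach (T - {{x, y}}) v y" and n2: "\<not> reach (T - {{x, y}}) v x"
          using p q pxy qxy eq unfolding Sf_def by auto
        have "{x, y} \<in> T" using p pxy unfolding Sf_def by auto
        then have "reach (T - {{x, y}}) x v \<or> reach (T - {{x, y}}) y v" using tree_side[OF T _ v] by blast
        then show False using n1 n2 reach_sym by metis
      qed
    qed simp
  next
    fix p assume "p \<in> Sf T v"
    then show "(case p of (x, y) \<Rightarrow> {x, y}) \<in> {e \<in> T. v \<notin> e}" unfolding Sf_def by auto
  next
    fix e assume e: "e \<in> {e \<in> T. v \<notin> e}"
    then obtain a b where ab: "e = {a, b}" "a \<noteq> b" using tree_edge[OF T] by blast
    have abT: "{a, b} \<in> T" using e ab by simp
    have nb: "\<not> reach (T - {{a, b}}) a b" using tree_bridge[OF T abT] .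
    have "reach (T - {{a, b}}) a v \<or> reach (T - {{a, b}}) b v" using tree_side[OF T abT v] .
    then show "\<exists>p \<in> Sf T v. e = (case p of (x, y) \<Rightarrow> {x, y})"
    proof
      assume av: "reach (T - {{a, b}}) a v"
      have "\<not> reach (T - {{a, b}}) v b"
      proof
        assume "reach (T - {{a, b}}) v b"
        then have "reach (T - {{a, b}}) a b" by (rule reach_trans[OF av])
        then show False using nb by simp
      qed
      then have "(a, b) \<in> Sf T v" using e ab unfolding Sf_def by auto
      then show ?thesis using ab by force
    next
      assume bv: "reach (T - {{a, b}}) b v"
      have "\<not> reach (T - {{a, b}}) v a"
      proof
        assume "reach (T - {{a, b}}) v a"
        then have "reach (T - {{a, b}}) b a" by (rule reach_trans[OF bv])
        then have "reach (T - {{a, b}}) a b" by (rule reach_sym)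
        then show False using nb by simp
      qed
      then have "\<not> reach (T - {{b, a}}) v a" by (simp add: insert_commute)
      then have "(b, a) \<in> Sf T v" using e ab unfolding Sf_def by (auto simp: insert_commute)
      then show ?thesis using ab by (force simp: insert_commute)
    qed
  qed
  then have "card (Sf T v) = card {e \<in> T. v \<notin> e}" by (rule bij_betw_same_card)
  moreover have "card {e \<in> T. v \<notin> e} + card {e \<in> T. v \<in> e} = card T"
  proof -
    have "T = {e \<in> T. v \<notin> e} \<union> {e \<in> T. v \<in> e}" by blast
    then have "card T = card ({e \<in> T. v \<notin> e} \<union> {e \<in> T. v \<in> e})" by (rule arg_cong)
    also have "\<dots> = card {e \<in> T. v \<notin> e} + card {e \<in> T. v \<in> e}"
      by (rule card_Un_disjoint) (use finT in auto)
    finally show ?thesis by simp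
  qed
  ultimately show ?thesis unfolding degree_def by simp
qed

lemma Rf_card:
  assumes T: "tree' V T" and fin: "finite V" and v: "v \<in> V"
  shows "card (Rf V T v) = (card V - 1) * (card {y. {v, y} \<in> T} - 1)"
proof -
  let ?N = "{y. {v, y} \<in> T}"
  have finN: "finite ?N"
  proof (rule finite_subset[OF _ fin])
    show "?N \<subseteq> V" using tree_edge2(3)[OF T] by blast
  qed
  have eq: "Rf V T v = (SIGMA x:V - {v}. {y \<in> ?N. \<not> reach (T - {{v, y}}) x y})"
    unfolding Rf_def by auto
  have c: "card {y \<in> ?N. \<not> reach (T - {{v, y}}) x y} = card ?N - 1" if x: "x \<in> V - {v}" for x
  proof -
    obtain y0 where y0: "{v, y0} \<in> T" "reach (T - {{v, y0}}) y0 x"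
      and un: "\<And>y. {v, y} \<in> T \<Longrightarrow> reach (T - {{v, y}}) y x \<Longrightarrow> y = y0"
      using nb_unique[OF T v, of x] x by blast
    have "{y \<in> ?N. \<not> reach (T - {{v, y}}) x y} = ?N - {y0}"
    proof (intro equalityI subsetI)
      fix y assume "y \<in> {y \<in> ?N. \<not> reach (T - {{v, y}}) x y}"
      then have "{v, y} \<in> T" "\<not> reach (T - {{v, y}}) x y" by auto
      moreover have "y \<noteq> y0"
      proof
        assume "y = y0"
        then have "reach (T - {{v, y}}) x y" using reach_sym[OF y0(2)] by simp
        then show False using calculation by simp
      qed
      ultimately show "y \<in> ?N - {y0}" by simp
    next
      fix y assume "y \<in> ?N - {y0}"
      then have y: "{v, y} \<in> T" "y \<noteq> y0" by auto
      have "\<not> reach (T - {{v, y}}) x y"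
      proof
        assume "reach (T - {{v, y}}) x y"
        then have "reach (T - {{v, y}}) y x" by (rule reach_sym)
        then have "y = y0" using un y(1) by blast
        then show False using y(2) by simp
      qed
      then show "y \<in> {y \<in> ?N. \<not> reach (T - {{v, y}}) x y}" using y by simp
    qed
    moreover have "y0 \<in> ?N" using y0 by simp
    ultimately show ?thesis using finN by (simp add: card_Diff_singleton)
  qed
  have "card (Rf V T v) = (\<Sum>x\<in>V - {v}. card {y \<in> ?N. \<not> reach (T - {{v, y}}) x y})"
    unfolding eq using fin finN by (subst card_SigmaI) auto
  also have "\<dots> = (\<Sum>x\<in>V - {v}. card ?N - 1)" using c by (rule sum.cong[OF refl])
  also have "\<dots> = (card V - 1) * (card ?N - 1)" using fin v by simp
  finally show ?thesis .
qed

definition mv :: "'a \<Rightarrow> 'a set set \<times> 'a \<times> 'a \<Rightarrow> 'a set set \<times> 'a \<times> 'a" where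
  "mv v s = (case s of (T, x, y) \<Rightarrow> (insert {v, y} (T - {{x, y}}), x, y))"

definition mvi :: "'a \<Rightarrow> 'a set set \<times> 'a \<times> 'a \<Rightarrow> 'a set set \<times> 'a \<times> 'a" where
  "mvi v s = (case s of (T, x, y) \<Rightarrow> (insert {x, y} (T - {{v, y}}), x, y))"

lemma mv_props:
  assumes T: "tree' V T" and v: "v \<in> V" and xy: "(x, y) \<in> Sf T v"
  shows "tree' V (insert {v, y} (T - {{x, y}}))"
    "(x, y) \<in> Rf V (insert {v, y} (T - {{x, y}})) v"
    "{v, y} \<notin> T"
    "mvi v (mv v (T, x, y)) = (T, x, y)"
proof -
  have h: "{x, y} \<in> T" "x \<noteq> v" "y \<noteq> v" "\<not> reach (T - {{x, y}}) v y"
    using xy unfolding Sf_def by auto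
  show t2: "tree' V (insert {v, y} (T - {{x, y}}))" by (rule tree_move[OF T h(1) v h(4)])
  have xV: "x \<in> V" using tree_edge2[OF T h(1)] by simp
  have nb: "\<not> reach (T - {{x, y}}) x y" by (rule tree_bridge[OF T h(1)])
  have nr: "\<not> reach (insert {v, y} (T - {{x, y}}) - {{v, y}}) x y"
  proof
    assume "reach (insert {v, y} (T - {{x, y}}) - {{v, y}}) x y"
    moreover have "insert {v, y} (T - {{x, y}}) - {{v, y}} \<subseteq> T - {{x, y}}" by blast
    ultimately have "reach (T - {{x, y}}) x y" by (rule reach_mono)
    then show False using nb by simp
  qed
  show "(x, y) \<in> Rf V (insert {v, y} (T - {{x, y}})) v"
    unfolding Rf_def using nr xV h(2) by simp
  have ne: "{v, y} \<noteq> {x, y}" using h(2,3) by (auto simp: doubleton_eq_iff)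
  show nvy: "{v, y} \<notin> T"
  proof
    assume "{v, y} \<in> T"
    then have "{v, y} \<in> T - {{x, y}}" using ne by simp
    then have "reach (T - {{x, y}}) v y" by (rule reach_edge)
    then show False using h(4) by simp
  qed
  have "insert {x, y} (insert {v, y} (T - {{x, y}}) - {{v, y}}) = T"
    using nvy h(1) ne by blast
  then show "mvi v (mv v (T, x, y)) = (T, x, y)" unfolding mv_def mvi_def by simp
qed

lemma mvi_props:
  assumes T: "tree' V T" and v: "v \<in> V" and xy: "(x, y) \<in> Rf V T v"
  shows "tree' V (insert {x, y} (T - {{v, y}}))"
    "(x, y) \<in> Sf (insert {x, y} (T - {{v, y}})) v"
    "mv v (mvi v (T, x, y)) = (T, x, y)"
proof -
  have h: "{v, y} \<in> T" "x \<in> V" "x \<noteq> v" "\<not> reach (T - {{v, y}}) x y"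
    using xy unfolding Rf_def by auto
  show t2: "tree' V (insert {x, y} (T - {{v, y}}))" by (rule tree_move[OF T h(1) h(2) h(4)])
  have yv: "y \<noteq> v" using tree_edge2[OF T h(1)] by simp
  have nb: "\<not> reach (T - {{v, y}}) v y" by (rule tree_bridge[OF T h(1)])
  have nr: "\<not> reach (insert {x, y} (T - {{v, y}}) - {{x, y}}) v y"
  proof
    assume "reach (insert {x, y} (T - {{v, y}}) - {{x, y}}) v y"
    moreover have "insert {x, y} (T - {{v, y}}) - {{x, y}} \<subseteq> T - {{v, y}}" by blast
    ultimately have "reach (T - {{v, y}}) v y" by (rule reach_mono)
    then show False using nb by simp
  qed
  show "(x, y) \<in> Sf (insert {x, y} (T - {{v, y}})) v"
    unfolding Sf_def using nr yv h(3) by simp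
  have ne: "{v, y} \<noteq> {x, y}" using h(3) yv by (auto simp: doubleton_eq_iff)
  have nxy: "{x, y} \<notin> T"
  proof
    assume "{x, y} \<in> T"
    then have "{x, y} \<in> T - {{v, y}}" using ne by simp
    then have "reach (T - {{v, y}}) x y" by (rule reach_edge)
    then show False using h(4) by simp
  qed
  have "insert {v, y} (insert {x, y} (T - {{v, y}}) - {{x, y}}) = T"
    using nxy h(1) ne by blast
  then show "mv v (mvi v (T, x, y)) = (T, x, y)" unfolding mv_def mvi_def by simp
qed

lemma trees_finite: "finite V \<Longrightarrow> finite {T. tree' V T}"
proof -
  assume fin: "finite V"
  have "{T. tree' V T} \<subseteq> Pow (Pow V)" using tree_edge by fastforce
  then show ?thesis using fin finite_subset by blast
qed

lemma key_identity:
  fixes h :: "nat \<Rightarrow> real"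
  assumes fin: "finite V" and v: "v \<in> V"
  shows "(\<Sum>T\<in>{T. tree' V T}. real (card (Sf T v)) * h (degree T v))
       = (\<Sum>T\<in>{T. tree' V T}. real (card (Rf V T v)) * h (degree T v - 1))"
proof -
  let ?Tr = "{T. tree' V T}"
  let ?SS = "SIGMA T:?Tr. Sf T v"
  let ?RR = "SIGMA T:?Tr. Rf V T v"
  have finTr: "finite ?Tr" by (rule trees_finite[OF fin])
  have finS: "\<forall>T\<in>?Tr. finite (Sf T v)"
  proof
    fix T assume "T \<in> ?Tr"
    then have T: "tree' V T" by simp
    have "Sf T v \<subseteq> V \<times> V" unfolding Sf_def using tree_edge2[OF T] by blast
    then show "finite (Sf T v)" using fin finite_subset by blast
  qed
  have finR: "\<forall>T\<in>?Tr. finite (Rf V T v)"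
  proof
    fix T assume "T \<in> ?Tr"
    then have T: "tree' V T" by simp
    have "Rf V T v \<subseteq> V \<times> V" unfolding Rf_def using tree_edge2[OF T] by blast
    then show "finite (Rf V T v)" using fin finite_subset by blast
  qed
  let ?g = "\<lambda>(T :: 'a set set, p :: 'a \<times> 'a). h (degree T v - 1)"
  have "(\<Sum>T\<in>?Tr. real (card (Sf T v)) * h (degree T v))
      = (\<Sum>T\<in>?Tr. \<Sum>p\<in>Sf T v. h (degree T v))" by simp
  also have "\<dots> = (\<Sum>(T, p)\<in>?SS. h (degree T v))"
    by (rule sum.Sigma[OF finTr finS])
  also have "\<dots> = (\<Sum>s\<in>?SS. ?g (mv v s))"
  proof (rule sum.cong[OF refl])
    fix s assume s: "s \<in> ?SS"
    then obtain T x y where sxy: "s = (T, x, y)" and T: "tree' V T" and xy: "(x, y) \<in> Sf T v"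
      by auto
    have h: "x \<noteq> v" "y \<noteq> v" using xy unfolding Sf_def by auto
    have "degree (insert {v, y} (T - {{x, y}})) v = degree T v + 1"
      by (rule degree_move[OF tree_finite[OF fin T] mv_props(3)[OF T v xy]]) (use h in auto)
    then show "(case s of (T, p) \<Rightarrow> h (degree T v)) = ?g (mv v s)"
      unfolding sxy mv_def by simp
  qed
  also have "\<dots> = (\<Sum>s\<in>?RR. ?g s)"
  proof (rule sum.reindex_bij_betw)
    show "bij_betw (mv v) ?SS ?RR"
    proof (rule bij_betw_byWitness[where f' = "mvi v"])
      show "\<forall>a\<in>?SS. mvi v (mv v a) = a" using mv_props(4)[OF _ v] by auto
      show "\<forall>a'\<in>?RR. mv v (mvi v a') = a'" using mvi_props(3)[OF _ v] by auto
      show "mv v ` ?SS \<subseteq> ?RR"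
      proof
        fix s assume "s \<in> mv v ` ?SS"
        then obtain T x y where "s = mv v (T, x, y)" "tree' V T" "(x, y) \<in> Sf T v" by auto
        then show "s \<in> ?RR" using mv_props(1,2)[OF _ v] unfolding mv_def by auto
      qed
      show "mvi v ` ?RR \<subseteq> ?SS"
      proof
        fix s assume "s \<in> mvi v ` ?RR"
        then obtain T x y where "s = mvi v (T, x, y)" "tree' V T" "(x, y) \<in> Rf V T v" by auto
        then show "s \<in> ?SS" using mvi_props(1,2)[OF _ v] unfolding mvi_def by auto
      qed
    qed
  qed
  also have "\<dots> = (\<Sum>T\<in>?Tr. \<Sum>p\<in>Rf V T v. h (degree T v - 1))"
    by (rule sum.Sigma[OF finTr finR, symmetric])
  also have "\<dots> = (\<Sum>T\<in>?Tr. real (card (Rf V T v)) * h (degree T v - 1))" by simp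
  finally show ?thesis .
qed

lemma tree_facts:
  assumes n: "2 \<le> n" and v: "v \<in> {1..n}" and T: "tree' {1..n} T"
  shows "real (card (Sf T v)) = real n - 1 - real (degree T v)"
    "real (card (Rf {1..n} T v)) = (real n - 1) * (real (degree T v) - 1)"
    "1 \<le> degree T v"
proof -
  have fin: "finite {1..n}" by simp
  have finT: "finite T" by (rule tree_finite[OF fin T])
  have cT: "card T + 1 = n" using tree_card[OF fin _ T] n by simp
  have cS: "card (Sf T v) + degree T v = card T" by (rule Sf_card[OF T fin v])
  then show "real (card (Sf T v)) = real n - 1 - real (degree T v)" using cT by linarith
  have cN: "card {y. {v, y} \<in> T} = degree T v" by (rule nb_card[OF T finT])
  define x where "x = (if v = 1 then 2 else (1::nat))"
  have x: "x \<in> {1..n}" "x \<noteq> v" using n unfolding x_def by auto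
  obtain y where "{v, y} \<in> T" using nb_unique[OF T v x] by blast
  then have "y \<in> {y. {v, y} \<in> T}" by simp
  moreover have "finite {y. {v, y} \<in> T}"
  proof (rule finite_subset[OF _ fin])
    show "{y. {v, y} \<in> T} \<subseteq> {1..n}" using tree_edge2(3)[OF T] by blast
  qed
  ultimately have "card {y. {v, y} \<in> T} \<ge> 1"
    by (metis One_nat_def Suc_leI card_gt_0_iff empty_iff)
  then show d1: "1 \<le> degree T v" using cN by simp
  have "card (Rf {1..n} T v) = (card {1..n} - 1) * (card {y. {v, y} \<in> T} - 1)"
    by (rule Rf_card[OF T fin v])
  then have "card (Rf {1..n} T v) = (n - 1) * (degree T v - 1)" using cN by simp
  then show "real (card (Rf {1..n} T v)) = (real n - 1) * (real (degree T v) - 1)"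
    using d1 n by (simp add: of_nat_diff)
qed

lemma per_vertex:
  assumes n: "2 \<le> n" and v: "v \<in> {1..n}"
  shows "(\<Sum>T\<in>{T. tree' {1..n} T}. (real (degree T v))^2)
       = real (card {T. tree' {1..n} T}) * ((real n - 1) * (5 * real n - 6) / (real n)^2)"
proof -
  let ?Tr = "{T. tree' {1..n} T}"
  let ?d = "\<lambda>T. real (degree T v)"
  let ?m = "real n"
  have fin: "finite {1..n}" by simp
  have E1: "(\<Sum>T\<in>?Tr. (?m - 1 - ?d T)) = (\<Sum>T\<in>?Tr. (?m - 1) * (?d T - 1))"
  proof -
    have "(\<Sum>T\<in>?Tr. real (card (Sf T v)) * (\<lambda>_. 1) (degree T v))
       = (\<Sum>T\<in>?Tr. real (card (Rf {1..n} T v)) * (\<lambda>_. 1) (degree T v - 1))"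
      by (rule key_identity[OF fin v])
    moreover have "(\<Sum>T\<in>?Tr. real (card (Sf T v)) * (\<lambda>_. 1) (degree T v)) = (\<Sum>T\<in>?Tr. (?m - 1 - ?d T))"
    proof (rule sum.cong[OF refl])
      fix T assume "T \<in> ?Tr"
      then have T: "tree' {1..n} T" by simp
      show "real (card (Sf T v)) * (\<lambda>_. 1) (degree T v) = ?m - 1 - ?d T"
        using tree_facts(1)[OF n v T] by simp
    qed
    moreover have "(\<Sum>T\<in>?Tr. real (card (Rf {1..n} T v)) * (\<lambda>_. 1) (degree T v - 1))
        = (\<Sum>T\<in>?Tr. (?m - 1) * (?d T - 1))"
    proof (rule sum.cong[OF refl])
      fix T assume "T \<in> ?Tr"
      then have T: "tree' {1..n} T" by simp
      show "real (card (Rf {1..n} T v)) * (\<lambda>_. 1) (degree T v - 1) = (?m - 1) * (?d T - 1)"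
        using tree_facts(2)[OF n v T] by simp
    qed
    ultimately show ?thesis by simp
  qed
  have E2: "(\<Sum>T\<in>?Tr. (?m - 1 - ?d T) * (?d T - 1)) = (\<Sum>T\<in>?Tr. (?m - 1) * (?d T - 1) * (?d T - 2))"
  proof -
    let ?h = "\<lambda>j::nat. real j - 1"
    have "(\<Sum>T\<in>?Tr. real (card (Sf T v)) * ?h (degree T v))
       = (\<Sum>T\<in>?Tr. real (card (Rf {1..n} T v)) * ?h (degree T v - 1))"
      by (rule key_identity[OF fin v])
    moreover have "(\<Sum>T\<in>?Tr. real (card (Sf T v)) * ?h (degree T v)) = (\<Sum>T\<in>?Tr. (?m - 1 - ?d T) * (?d T - 1))"
    proof (rule sum.cong[OF refl])
      fix T assume "T \<in> ?Tr"
      then have T: "tree' {1..n} T" by simp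
      show "real (card (Sf T v)) * ?h (degree T v) = (?m - 1 - ?d T) * (?d T - 1)"
        using tree_facts(1)[OF n v T] by simp
    qed
    moreover have "(\<Sum>T\<in>?Tr. real (card (Rf {1..n} T v)) * ?h (degree T v - 1))
        = (\<Sum>T\<in>?Tr. (?m - 1) * (?d T - 1) * (?d T - 2))"
    proof (rule sum.cong[OF refl])
      fix T assume "T \<in> ?Tr"
      then have T: "tree' {1..n} T" by simp
      have "real (degree T v - 1) = ?d T - 1" using tree_facts(3)[OF n v T] by (simp add: of_nat_diff)
      then show "real (card (Rf {1..n} T v)) * ?h (degree T v - 1) = (?m - 1) * (?d T - 1) * (?d T - 2)"
        using tree_facts(2)[OF n v T] by simp
    qed
    ultimately show ?thesis by simp
  qed
  have pt: "?m^2 * (?d T)^2 - (?m - 1) * (5 * ?m - 6)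
     = - (4 * ?m - 3) * ((?m - 1 - ?d T) - (?m - 1) * (?d T - 1))
       - ?m * ((?m - 1 - ?d T) * (?d T - 1) - (?m - 1) * (?d T - 1) * (?d T - 2))" for T
    by (simp add: algebra_simps power2_eq_square)
  define A1 where "A1 = (\<lambda>T. ?m - 1 - ?d T)"
  define B1 where "B1 = (\<lambda>T. (?m - 1) * (?d T - 1))"
  define A2 where "A2 = (\<lambda>T. (?m - 1 - ?d T) * (?d T - 1))"
  define B2 where "B2 = (\<lambda>T. (?m - 1) * (?d T - 1) * (?d T - 2))"
  define c1 where "c1 = - (4 * ?m - 3)"
  have E1': "sum A1 ?Tr = sum B1 ?Tr" using E1 unfolding A1_def B1_def .
  have E2': "sum A2 ?Tr = sum B2 ?Tr" using E2 unfolding A2_def B2_def .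
  have "(\<Sum>T\<in>?Tr. ?m^2 * (?d T)^2 - (?m - 1) * (5 * ?m - 6))
     = (\<Sum>T\<in>?Tr. c1 * (A1 T - B1 T) - ?m * (A2 T - B2 T))"
    using pt unfolding A1_def B1_def A2_def B2_def c1_def by simp
  also have "\<dots> = c1 * (sum A1 ?Tr - sum B1 ?Tr) - ?m * (sum A2 ?Tr - sum B2 ?Tr)"
    unfolding sum_subtractf sum_distrib_left[symmetric] by (rule refl)
  also have "\<dots> = 0" using E1' E2' by simp
  finally have Z: "(\<Sum>T\<in>?Tr. ?m^2 * (?d T)^2 - (?m - 1) * (5 * ?m - 6)) = 0" .
  have "(\<Sum>T\<in>?Tr. ?m^2 * (?d T)^2 - (?m - 1) * (5 * ?m - 6))
     = ?m^2 * (\<Sum>T\<in>?Tr. (?d T)^2) - real (card ?Tr) * ((?m - 1) * (5 * ?m - 6))"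
    unfolding sum_subtractf sum_distrib_left[symmetric] by (simp add: algebra_simps)
  then have "?m^2 * (\<Sum>T\<in>?Tr. (?d T)^2) - real (card ?Tr) * ((?m - 1) * (5 * ?m - 6)) = 0"
    using Z by simp
  moreover have "?m > 0" using n by simp
  ultimately show ?thesis by (simp add: field_simps)
qed

lemma star_tree:
  assumes n: "2 \<le> n"
  shows "tree' {1..n} {{1, i} | i. i \<in> {2..(n::nat)}}"
proof -
  let ?S = "{{1, i} | i. i \<in> {2..n}}"
  have simple: "simple_graph {1..n} ?S"
    unfolding simple_graph_def
  proof
    fix f assume "f \<in> ?S"
    then obtain i where i: "f = {1, i}" "i \<in> {2..n}" by blast
    have "1 \<in> {1..n}" "i \<in> {1..n}" "1 \<noteq> i" using i(2) n by auto
    then show "f \<in> {{u, v} |u v. u \<in> {1..n} \<and> v \<in> {1..n} \<and> u \<noteq> v}"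
      using i(1) by blast
  qed
  have r1: "reach ?S 1 u" if "u \<in> {1..n}" for u
  proof (cases "u = 1")
    case True then show ?thesis by simp
  next
    case False
    then have "{1, u} \<in> ?S" using that by auto
    then show ?thesis by (rule reach_edge)
  qed
  have conn: "\<forall>u\<in>{1..n}. \<forall>w\<in>{1..n}. reach ?S u w"
  proof (intro ballI)
    fix u w assume "u \<in> {1..n}" "w \<in> {1..n}"
    then show "reach ?S u w" using reach_trans[OF reach_sym[OF r1[of u]] r1[of w]] by simp
  qed
  have br: "bridges ?S"
    unfolding bridges_def
  proof (intro allI impI notI)
    fix a b assume ab: "{a, b} \<in> ?S" and rab: "reach (?S - {{a, b}}) a b"
    from ab obtain i where i: "{a, b} = {1, i}" "i \<in> {2..n}" by blast
    let ?G = "?S - {{a, b}}"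
    have "reach ?G 1 i"
    proof (cases "a = 1")
      case True
      then have "b = i" using i by (auto simp: doubleton_eq_iff)
      then show ?thesis using rab True by simp
    next
      case False
      then have "a = i" "b = 1" using i by (auto simp: doubleton_eq_iff)
      then show ?thesis using reach_sym[OF rab] by simp
    qed
    moreover have "(1::nat) \<noteq> i" using i by simp
    ultimately have "\<exists>e\<in>?G. i \<in> e" by (rule reach_isolated)
    then obtain e where e: "e \<in> ?G" "i \<in> e" by blast
    from e(1) obtain j where j: "e = {1, j}" "j \<in> {2..n}" by blast
    have "e \<noteq> {1, i}" using e(1) i(1) by simp
    then have "j \<noteq> i" using j(1) by blast
    moreover have "i \<noteq> 1" using i(2) by simp
    ultimately show False using e(2) j(1) by simp
  qed
  show ?thesis unfolding tree'_def by (intro conjI simple conn br)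
qed

lemma labeled_trees_eq: "labeled_trees n = {T. tree' {1..n} T}"
  unfolding labeled_trees_def using is_tree_iff by blast

lemma main_ge2:
  assumes n: "2 \<le> n"
  shows "(\<Sum>T\<in>labeled_trees n. E0C n T) / real (card (labeled_trees n))
       = real n * (real n - 1) / 6 - (real n - 1) * (5 * real n - 6) / (6 * real n)"
proof -
  let ?Tr = "{T. tree' {1..n} T}"
  let ?m = "real n"
  let ?N = "real (card ?Tr)"
  let ?c = "(?m - 1) * (5 * ?m - 6)"
  have m0: "?m > 0" using n by simp
  have finTr: "finite ?Tr" by (rule trees_finite) simp
  have "?Tr \<noteq> {}" using star_tree[OF n] by blast
  then have N0: "?N > 0" using finTr by (simp add: card_gt_0_iff)
  have sw: "(\<Sum>T\<in>?Tr. \<Sum>i=1..n. (real (degree T i))^2) = ?N * ?c / ?m"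
  proof -
    have "(\<Sum>T\<in>?Tr. \<Sum>i=1..n. (real (degree T i))^2) = (\<Sum>i=1..n. \<Sum>T\<in>?Tr. (real (degree T i))^2)"
      by (rule sum.swap)
    also have "\<dots> = (\<Sum>i=1..n. ?N * (?c / ?m^2))"
      by (rule sum.cong[OF refl]) (rule per_vertex[OF n], simp)
    also have "\<dots> = ?m * (?N * (?c / ?m^2))" by simp
    also have "\<dots> = ?N * ?c / ?m" using m0 by (simp add: power2_eq_square field_simps)
    finally show ?thesis .
  qed
  have "(\<Sum>T\<in>?Tr. E0C n T) = (\<Sum>T\<in>?Tr. ?m * (?m - 1) / 6 - (1/6) * (\<Sum>i=1..n. (real (degree T i))^2))"
  proof (rule sum.cong[OF refl])
    fix T
    show "E0C n T = ?m * (?m - 1) / 6 - (1/6) * (\<Sum>i=1..n. (real (degree T i))^2)"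
      unfolding E0C_def second_moment_degree_def using m0 by (simp add: field_simps)
  qed
  also have "\<dots> = ?N * (?m * (?m - 1) / 6) - (1/6) * (\<Sum>T\<in>?Tr. \<Sum>i=1..n. (real (degree T i))^2)"
    unfolding sum_subtractf sum_distrib_left[symmetric] by simp
  also have "\<dots> = ?N * (?m * (?m - 1) / 6) - (1/6) * (?N * ?c / ?m)" unfolding sw ..
  also have "\<dots> = ?N * (?m * (?m - 1) / 6 - ?c / (6 * ?m))"
    using m0 by (simp add: field_simps)
  finally have S: "(\<Sum>T\<in>?Tr. E0C n T) = ?N * (?m * (?m - 1) / 6 - ?c / (6 * ?m))" .
  show ?thesis unfolding labeled_trees_eq S using N0 by simp
qed

theorem proposition1:
  fixes n :: nat
  assumes "n \<ge> 1"
  shows "(\<Sum>T\<in>labeled_trees n. E0C n T) / real (card (labeled_trees n))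
           = 1/6 * (real n - 1) * (real n - 5 + 6 / real n)
       \<and> (\<Sum>T\<in>labeled_trees n. E0C n T) / real (card (labeled_trees n))
           = (real n)^2 / 6 - real n + 11/6 - 1 / real n"
proof (cases "n = 1")
  case True
  have z: "E0C n T = 0" if "T \<in> labeled_trees n" for T
  proof -
    have "simple_graph {1..n} T" using that unfolding labeled_trees_def is_tree_def by simp
    then have "T = {}" using True unfolding simple_graph_def by auto
    then show ?thesis using True unfolding E0C_def second_moment_degree_def degree_def by simp
  qed
  have "(\<Sum>T\<in>labeled_trees n. E0C n T) = 0" using z by simp
  then show ?thesis using True by simp
next
  case False
  then have n: "2 \<le> n" using assms by simp
  have m0: "real n > 0" using n by simp
  show ?thesis unfolding main_ge2[OF n] using m0
    by (simp add: field_simps power2_eq_square)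
qed

end
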